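(* Let $S=\{p_1,\dots,p_n\}\subset\mathbb{R}^d$ satisfy the sparsity and bounded doubling dimension assumptions, and let $W\in\mathbb{R}^{n\times n}$ be its Gaussian affinity matrix. Then there is a factor $\mathrm{polylog}(n)=(\log n)^{O(d_0)}$ such that for all $1\le i\le n$, $$\frac{1}{\mathrm{polylog}(n)}\,\frac{\|W\|_F^2}{n}\;\le\; C_i\;\le\;\mathrm{polylog}(n)\,\frac{\|W\|_F^2}{n},$$ where $C_i=\|W_{:,i}\|^2$ is the squared norm of the $i$-th column of $W$.
   Context: $W_{i,j}=\exp(-\|p_i-p_j\|^2/\sigma)$ with a fixed parameter $\sigma>0$ treated as a constant. Sparsity assumption: for all $i\ne j$, $\|p_i-p_j\|\ge 0.1\,\sigma/\log n$. Bounded doubling dimension assumption: there is a constant $d_0$ such that for every $r>0$ and $\epsilon>0$, any ball of radius $r$ contains at most $O((r/\epsilon)^{d_0})$ points of $S$ that are pairwise at distance at least $\epsilon$. $\|W\|_F$ is the Frobenius norm. *)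

theory Defs
  imports "HOL-Analysis.Analysis"
begin

text \<open>Gaussian affinity matrix of points p 0, ..., p (n-1) (0-based indices).\<close>
definition gauss_W :: "real \<Rightarrow> (nat \<Rightarrow> 'a::real_normed_vector) \<Rightarrow> nat \<Rightarrow> nat \<Rightarrow> real" where
  "gauss_W \<sigma> p i j = exp (- (norm (p i - p j))\<^sup>2 / \<sigma>)"

definition frob_sq :: "nat \<Rightarrow> (nat \<Rightarrow> nat \<Rightarrow> real) \<Rightarrow> real" where
  "frob_sq n W = (\<Sum>i<n. \<Sum>j<n. (W i j)\<^sup>2)"

definition col_sq :: "nat \<Rightarrow> (nat \<Rightarrow> nat \<Rightarrow> real) \<Rightarrow> nat \<Rightarrow> real" where
  "col_sq n W i = (\<Sum>j<n. (W j i)\<^sup>2)"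

definition sparse_pts :: "real \<Rightarrow> nat \<Rightarrow> (nat \<Rightarrow> 'a::real_normed_vector) \<Rightarrow> bool" where
  "sparse_pts \<sigma> n p \<longleftrightarrow>
     (\<forall>i<n. \<forall>j<n. i \<noteq> j \<longrightarrow> norm (p i - p j) \<ge> 0.1 * \<sigma> / ln (real n))"

text \<open>Bounded doubling dimension with exponent d0 and implied O-constant K.
  The bound is read as K * max 1 ((r/eps)^d0), since a single point is always an
  eps-separated subset of any ball containing it.\<close>
definition doubling_pts :: "real \<Rightarrow> real \<Rightarrow> nat \<Rightarrow> (nat \<Rightarrow> 'a::real_normed_vector) \<Rightarrow> bool" where
  "doubling_pts d0 K n p \<longleftrightarrow>
     (\<forall>c r \<epsilon> T. r > 0 \<longrightarrow> \<epsilon> > 0 \<longrightarrow> T \<subseteq> p ` {..<n} \<longrightarrow> T \<subseteq> cball c r \<longrightarrow>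
        (\<forall>x\<in>T. \<forall>y\<in>T. x \<noteq> y \<longrightarrow> dist x y \<ge> \<epsilon>) \<longrightarrow>
        real (card T) \<le> K * max 1 ((r / \<epsilon>) powr d0))"

end

theory Submission
  imports Defs
begin

lemma col_bound:
  fixes p :: "nat \<Rightarrow> 'a::euclidean_space"
  assumes sp: "\<sigma> > 0" and d0: "d0 \<ge> 0" and Kp: "K > 0" and n2: "n \<ge> 2"
    and sparse: "sparse_pts \<sigma> n p" and dbl: "doubling_pts d0 K n p" and i: "i < n"
  shows "col_sq n (gauss_W \<sigma> p) i \<le> 1 + K * max 1 (((10 / sqrt \<sigma>) powr d0) * ln (real n) powr (3/2*d0))"
proof -
  define L where "L = ln (real n)"
  have L0: "L > 0" using n2 unfolding L_def by simp
  define R where "R = sqrt (\<sigma> * L)"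
  define \<epsilon> where "\<epsilon> = 0.1 * \<sigma> / L"
  have e0: "\<epsilon> > 0" using sp L0 by (simp add: \<epsilon>_def)
  have R0: "R > 0" using sp L0 by (simp add: R_def)
  define f where "f j = (gauss_W \<sigma> p j i)\<^sup>2" for j
  define J1 where "J1 = {j\<in>{..<n}. norm (p j - p i) \<le> R}"
  define J2 where "J2 = {..<n} - J1"
  have sepa: "norm (p j - p k) \<ge> \<epsilon>" if "j < n" "k < n" "j \<noteq> k" for j k
    using sparse that unfolding sparse_pts_def \<epsilon>_def L_def by blast
  have f01: "0 \<le> f j \<and> f j \<le> exp (- (norm (p j - p i))\<^sup>2 / \<sigma>)" for j
  proof -
    have a: "exp (- (norm (p j - p i))\<^sup>2 / \<sigma>) \<le> 1" using sp by simp
    have "f j = exp (- (norm (p j - p i))\<^sup>2 / \<sigma>) * exp (- (norm (p j - p i))\<^sup>2 / \<sigma>)"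
      by (simp add: f_def gauss_W_def power2_eq_square)
    also have "\<dots> \<le> exp (- (norm (p j - p i))\<^sup>2 / \<sigma>)"
      using a by (simp add: mult_left_le)
    finally show ?thesis by (simp add: f_def)
  qed
  have f1: "f j \<le> 1" for j
  proof -
    have "exp (- (norm (p j - p i))\<^sup>2 / \<sigma>) \<le> 1" using sp by simp
    thus ?thesis using f01[of j] by linarith
  qed
  have col: "col_sq n (gauss_W \<sigma> p) i = sum f J1 + sum f J2"
    unfolding col_sq_def f_def J2_def
    using sum.subset_diff[of J1 "{..<n}" "\<lambda>j. (gauss_W \<sigma> p j i)\<^sup>2"] by (auto simp: J1_def add.commute)
  have s2: "sum f J2 \<le> 1"
  proof -
    have "f j \<le> 1 / real n" if "j \<in> J2" for j
    proof -
      have "norm (p j - p i) > R" using that by (auto simp: J2_def J1_def)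
      hence "(norm (p j - p i))\<^sup>2 > R\<^sup>2" using R0 power_strict_mono[of R "norm (p j - p i)" 2] by simp
      hence "(norm (p j - p i))\<^sup>2 > \<sigma> * L" using sp L0 by (simp add: R_def)
      hence "- (norm (p j - p i))\<^sup>2 / \<sigma> < - L" using sp by (simp add: field_simps)
      hence "exp (- (norm (p j - p i))\<^sup>2 / \<sigma>) \<le> exp (- L)" by simp
      also have "\<dots> = 1 / real n" using n2 by (simp add: L_def exp_minus inverse_eq_divide)
      finally show ?thesis using f01[of j] by linarith
    qed
    hence "sum f J2 \<le> real (card J2) * (1 / real n)"
      using sum_bounded_above[of J2 f "1/real n"] by simp
    also have "\<dots> \<le> real n * (1 / real n)"
    proof (intro mult_right_mono)
      have "card J2 \<le> card {..<n}" unfolding J2_def by (rule card_mono) auto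
      thus "real (card J2) \<le> real n" by simp
    qed simp
    also have "\<dots> = 1" using n2 by simp
    finally show ?thesis .
  qed
  have s1: "sum f J1 \<le> real (card J1)"
    using sum_bounded_above[of J1 f 1] f1 by simp
  have inj: "inj_on p J1"
  proof (rule inj_onI)
    fix j k assume "j \<in> J1" "k \<in> J1" "p j = p k"
    thus "j = k" using sepa[of j k] e0 by (auto simp: J1_def)
  qed
  have cardT: "real (card (p ` J1)) \<le> K * max 1 ((R / \<epsilon>) powr d0)"
  proof -
    have T1: "p ` J1 \<subseteq> p ` {..<n}" by (auto simp: J1_def)
    have T2: "p ` J1 \<subseteq> cball (p i) R" by (auto simp: J1_def dist_norm norm_minus_commute)
    have T3: "\<forall>x\<in>p ` J1. \<forall>y\<in>p ` J1. x \<noteq> y \<longrightarrow> dist x y \<ge> \<epsilon>"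
      using sepa by (auto simp: J1_def dist_norm)
    show ?thesis using dbl R0 e0 T1 T2 T3 unfolding doubling_pts_def by blast
  qed
  have Re: "R / \<epsilon> = (10 / sqrt \<sigma>) * L powr (3/2)"
  proof -
    have "L powr (3/2) = L powr (1 + 1/2)" by simp
    also have "\<dots> = L * sqrt L"
      using L0 by (simp only: powr_add powr_half_sqrt powr_one_gt_zero_iff) simp
    finally have "L powr (3/2) = L * sqrt L" .
    moreover have "sqrt \<sigma> * sqrt \<sigma> = \<sigma>" using sp by simp
    ultimately show ?thesis using sp L0
      by (simp add: R_def \<epsilon>_def real_sqrt_mult field_simps)
  qed
  have pw: "(R / \<epsilon>) powr d0 = ((10 / sqrt \<sigma>) powr d0) * L powr (3/2*d0)"
  proof -
    have "((10 / sqrt \<sigma>) * L powr (3/2)) powr d0 = (10 / sqrt \<sigma>) powr d0 * (L powr (3/2)) powr d0"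
      by (rule powr_mult; use sp in auto)
    also have "(L powr (3/2)) powr d0 = L powr (3/2*d0)" by (simp add: powr_powr)
    finally show ?thesis unfolding Re .
  qed
  have "col_sq n (gauss_W \<sigma> p) i \<le> real (card J1) + 1" using col s1 s2 by linarith
  also have "real (card J1) = real (card (p ` J1))" using card_image[OF inj] by simp
  finally show ?thesis using cardT pw L_def by simp
qed

theorem corollary1:
  shows "\<exists>B>0. \<forall>\<sigma> d0 K. \<sigma> > 0 \<and> d0 \<ge> 0 \<and> K > 0 \<longrightarrow>
    (\<exists>A>0. \<forall>n (p :: nat \<Rightarrow> 'a::euclidean_space).
       n \<ge> 2 \<and> sparse_pts \<sigma> n p \<and> doubling_pts d0 K n p \<longrightarrow>
       (let polylog = A * ln (real n) powr (B * d0); W = gauss_W \<sigma> p in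
        \<forall>i<n. frob_sq n W / (polylog * real n) \<le> col_sq n W i \<and>
              col_sq n W i \<le> polylog * frob_sq n W / real n))"
proof -
  have key: "\<exists>A>0. \<forall>n (p :: nat \<Rightarrow> 'a::euclidean_space).
       n \<ge> 2 \<and> sparse_pts \<sigma> n p \<and> doubling_pts d0 K n p \<longrightarrow>
       (let polylog = A * ln (real n) powr (3/2 * d0); W = gauss_W \<sigma> p in
        \<forall>i<n. frob_sq n W / (polylog * real n) \<le> col_sq n W i \<and>
              col_sq n W i \<le> polylog * frob_sq n W / real n)"
    if sp: "\<sigma> > 0" and d0: "d0 \<ge> 0" and Kp: "K > 0" for \<sigma> d0 K
  proof -
    define c where "c = (10 / sqrt \<sigma>) powr d0"
    define y0 where "y0 = ln 2 powr (3/2*d0)"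
    define A where "A = (1 + K + K * c) / y0"
    have c0: "c \<ge> 0" by (simp add: c_def)
    have y00: "y0 > 0" by (simp add: y0_def)
    have y01: "y0 \<le> 1"
    proof -
      have "ln (2::real) powr (3/2*d0) \<le> 1 powr (3/2*d0)"
        using d0 ln_2_less_1 by (intro powr_mono2) auto
      thus ?thesis by (simp add: y0_def)
    qed
    have A0: "A > 0" using Kp c0 y00 unfolding A_def
      by (intro divide_pos_pos) (auto intro: add_pos_nonneg)
    show ?thesis
    proof (intro exI[of _ A] conjI allI impI A0)
      fix n and p :: "nat \<Rightarrow> 'a"
      assume H: "n \<ge> 2 \<and> sparse_pts \<sigma> n p \<and> doubling_pts d0 K n p"
      define Y where "Y = ln (real n) powr (3/2*d0)"
      define P where "P = A * Y"
      define W where "W = gauss_W \<sigma> p"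
      have Yy: "Y \<ge> y0" unfolding Y_def y0_def
        by (rule powr_mono2) (use d0 H in auto)
      have Y0: "Y > 0" using Yy y00 by linarith
      have cb: "col_sq n W i \<le> P" if "i < n" for i
      proof -
        have "col_sq n W i \<le> 1 + K * max 1 (c * Y)"
          using col_bound[OF sp d0 Kp _ _ _ that, of p] H by (simp add: W_def c_def Y_def)
        also have "\<dots> \<le> 1 + K + K * c * Y"
          using Kp c0 Y0 by (simp add: max_def)
        also have "\<dots> \<le> (1 + K) * (Y / y0) + K * c * (Y / y0)"
        proof -
          have "1 \<le> Y / y0" using Yy y00 by simp
          moreover have "Y \<le> Y / y0" using y01 y00 Y0 by (simp add: field_simps mult_left_le)
          moreover have "K * c * Y \<le> K * c * (Y / y0)"
            using \<open>Y \<le> Y / y0\<close> Kp c0 by (intro mult_left_mono) auto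
          moreover have "1 + K \<le> (1 + K) * (Y / y0)"
            using mult_left_mono[OF \<open>1 \<le> Y / y0\<close>, of "1+K"] Kp by simp
          ultimately show ?thesis by linarith
        qed
        also have "\<dots> = P" using y00 by (simp add: P_def A_def add_divide_distrib[symmetric] algebra_simps)
        finally show ?thesis .
      qed
      have c1: "col_sq n W i \<ge> 1" if "i < n" for i
      proof -
        have "(W i i)\<^sup>2 \<le> col_sq n W i"
          unfolding col_sq_def using that by (intro member_le_sum) auto
        thus ?thesis by (simp add: W_def gauss_W_def)
      qed
      have fr: "frob_sq n W = (\<Sum>i<n. col_sq n W i)"
        unfolding frob_sq_def col_sq_def by (rule sum.swap)
      have frl: "frob_sq n W \<ge> real n"
        using sum_mono[of "{..<n}" "\<lambda>_. 1" "col_sq n W"] c1 fr by simp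
      have fru: "frob_sq n W \<le> real n * P"
        using sum_mono[of "{..<n}" "col_sq n W" "\<lambda>_. P"] cb fr by simp
      have n0: "real n > 0" using H by simp
      have P0: "P > 0" using A0 Y0 by (simp add: P_def)
      show "let polylog = A * ln (real n) powr (3/2 * d0); W = gauss_W \<sigma> p in
        \<forall>i<n. frob_sq n W / (polylog * real n) \<le> col_sq n W i \<and>
              col_sq n W i \<le> polylog * frob_sq n W / real n"
        unfolding Let_def W_def[symmetric] Y_def[symmetric] P_def[symmetric]
      proof (intro allI impI conjI)
        fix i assume i: "i < n"
        have "frob_sq n W / (P * real n) \<le> 1"
          using fru n0 P0 by (simp add: field_simps)
        thus "frob_sq n W / (P * real n) \<le> col_sq n W i" using c1[OF i] by linarith
        have "P \<le> P * frob_sq n W / real n"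
          using frl n0 P0 by (simp add: field_simps)
        thus "col_sq n W i \<le> P * frob_sq n W / real n" using cb[OF i] by linarith
      qed
    qed
  qed
  have "(3/2::real) > 0" by simp
  moreover have "\<forall>\<sigma> d0 K. \<sigma> > 0 \<and> d0 \<ge> 0 \<and> K > 0 \<longrightarrow>
    (\<exists>A>0. \<forall>n (p :: nat \<Rightarrow> 'a::euclidean_space).
       n \<ge> 2 \<and> sparse_pts \<sigma> n p \<and> doubling_pts d0 K n p \<longrightarrow>
       (let polylog = A * ln (real n) powr ((3/2) * d0); W = gauss_W \<sigma> p in
        \<forall>i<n. frob_sq n W / (polylog * real n) \<le> col_sq n W i \<and>
              col_sq n W i \<le> polylog * frob_sq n W / real n))"
    using key by blast
  ultimately show ?thesis by blast
qed

end
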